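(* Assume (H1), fix $\theta_0\in(0,2)$ and $x,y\in\mathbb{R}^d$, and let $\zeta$ and $(X_t,Y_t)_{t\in[0,T)}$ be as in the context. Then almost surely, for every $s_0\in[0,T)$, $$\int_0^{s_0}\frac{|X_t-Y_t|^2}{\zeta^4(t)}dt+\frac{|X_{s_0}-Y_{s_0}|^2}{\theta_0\,\zeta^3(s_0)}\le\frac{|x-y|^2}{\theta_0\,\zeta^3(0)}.$$
   Context: Fix $T>0$, $H\in(1/2,1)$; $B^H$ is a $d$-dimensional fractional Brownian motion with Hurst parameter $H$. SDE: $dX_t=b(t,X_t)dt+\sigma(t)dB^H_t$, $X_0=x$, with $b:[0,T]\times\mathbb{R}^d\to\mathbb{R}^d$, $\sigma:[0,T]\to$ invertible $d\times d$ matrices. Assumption (H1): (i) there is $K>0$ with $|b(t,x)-b(t,y)|\le K|x-y|$ for all $t,x,y$, and $t\mapsto b(t,x)$ is Lipschitz for each $x$; (ii) $\sigma$ is bounded and $|\sigma^{-1}(t)-\sigma^{-1}(s)|\le\bar K|t-s|^{\alpha_0}$ for some $\bar K\ge0$, $\alpha_0\in(H-1/2,1]$. For $\theta_0\in(0,2)$ set $\zeta(t)=\frac{2-\theta_0}{2K}\big(1-e^{\frac23K(t-T)}\big)$, $t\in[0,T]$. $X$ solves the SDE with $X_0=x$, and $Y$ is the solution on $[0,T)$ of $dY_t=b(t,Y_t)dt+\sigma(t)dB^H_t+\frac{X_t-Y_t}{\zeta(t)}dt$, $Y_0=y$ (driven by the same $B^H$). *)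

theory Defs
  imports "HOL-Probability.Probability"
begin

definition zeta :: "real \<Rightarrow> real \<Rightarrow> real \<Rightarrow> real \<Rightarrow> real" where
  "zeta K theta0 T t = (2 - theta0) / (2 * K) * (1 - exp (2/3 * K * (t - T)))"

definition H1_drift :: "real \<Rightarrow> real \<Rightarrow> (real \<Rightarrow> real^'d \<Rightarrow> real^'d) \<Rightarrow> bool" where
  "H1_drift T K b \<longleftrightarrow> K > 0
     \<and> (\<forall>t\<in>{0..T}. \<forall>u v. norm (b t u - b t v) \<le> K * norm (u - v))
     \<and> (\<forall>u. \<exists>L. \<forall>s\<in>{0..T}. \<forall>t\<in>{0..T}. norm (b t u - b s u) \<le> L * \<bar>t - s\<bar>)"

definition H1_diffusion :: "real \<Rightarrow> real \<Rightarrow> real \<Rightarrow> real \<Rightarrow> (real \<Rightarrow> real^'d^'d) \<Rightarrow> bool" where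
  "H1_diffusion T H Kbar alpha0 \<sigma> \<longleftrightarrow>
       (\<forall>t\<in>{0..T}. invertible (\<sigma> t))
     \<and> (\<exists>C. \<forall>t\<in>{0..T}. norm (\<sigma> t) \<le> C)
     \<and> Kbar \<ge> 0 \<and> H - 1/2 < alpha0 \<and> alpha0 \<le> 1
     \<and> (\<forall>s\<in>{0..T}. \<forall>t\<in>{0..T}.
          norm (matrix_inv (\<sigma> t) - matrix_inv (\<sigma> s)) \<le> Kbar * \<bar>t - s\<bar> powr alpha0)"

end

theory Submission
  imports Defs
begin



lemma b_cont:
  fixes b :: "real \<Rightarrow> real^'d \<Rightarrow> real^'d" and w :: "real \<Rightarrow> real^'d"
  assumes bL: "\<forall>t\<in>{0..T}. \<forall>p q. norm (b t p - b t q) \<le> K * norm (p - q)"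
    and bT: "\<forall>p. \<exists>L. \<forall>s\<in>{0..T}. \<forall>t\<in>{0..T}. norm (b t p - b s p) \<le> L * \<bar>t - s\<bar>"
    and S: "S \<subseteq> {0..T}" and wc: "continuous_on S w"
  shows "continuous_on S (\<lambda>s. b s (w s))"
  unfolding continuous_on_def
proof
  fix t assume t: "t \<in> S"
  obtain L where L: "\<forall>s\<in>{0..T}. \<forall>r\<in>{0..T}. norm (b r (w t) - b s (w t)) \<le> L * \<bar>r - s\<bar>"
    using bT by blast
  have wt: "(w \<longlongrightarrow> w t) (at t within S)" using wc t continuous_on_def by blast
  have g: "((\<lambda>s. K * norm (w s - w t) + L * \<bar>s - t\<bar>) \<longlongrightarrow> K * norm (w t - w t) + L * \<bar>t - t\<bar>) (at t within S)"
    by (intro tendsto_intros wt)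
  have ev: "eventually (\<lambda>s. norm (b s (w s) - b t (w t)) \<le> K * norm (w s - w t) + L * \<bar>s - t\<bar>) (at t within S)"
  proof -
    have "norm (b s (w s) - b t (w t)) \<le> K * norm (w s - w t) + L * \<bar>s - t\<bar>" if "s \<in> S" for s
    proof -
      have "norm (b s (w s) - b t (w t)) \<le> norm (b s (w s) - b s (w t)) + norm (b s (w t) - b t (w t))"
        by (metis diff_add_cancel norm_triangle_ineq add_diff_eq)
      also have "\<dots> \<le> K * norm (w s - w t) + L * \<bar>s - t\<bar>"
      proof (rule add_mono)
        show "norm (b s (w s) - b s (w t)) \<le> K * norm (w s - w t)" using bL that S by blast
        have "s \<in> {0..T}" "t \<in> {0..T}" using that t S by auto
        then show "norm (b s (w t) - b t (w t)) \<le> L * \<bar>s - t\<bar>" using L by blast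
      qed
      finally show ?thesis .
    qed
    then show ?thesis by (auto simp: eventually_at_filter)
  qed
  show "((\<lambda>s. b s (w s)) \<longlongrightarrow> b t (w t)) (at t within S)"
    apply (rule LIM_zero_cancel)
    apply (rule Lim_null_comparison[OF ev])
    using g by simp
qed

lemma zeta_pos:
  assumes "K > 0" "theta0 < 2" "t < T"
  shows "zeta K theta0 T t > 0"
proof -
  have "K * (t - T) < 0" using assms by (simp add: mult_pos_neg)
  then have "exp (2/3 * K * (t - T)) < 1" by simp
  then show ?thesis using assms unfolding zeta_def by (intro mult_pos_pos) auto
qed

lemma zeta_deriv:
  "(zeta K theta0 T has_real_derivative
     - ((2 - theta0) / (2 * K) * (exp (2/3 * K * (t - T)) * (2/3 * K)))) (at t)"
  unfolding zeta_def[abs_def]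
  by (auto intro!: derivative_eq_intros)

lemma key_ineq:
  fixes q zd z e K th c :: real
  assumes zpos: "z > 0" and th: "th > 0" and K: "K > 0"
    and c: "c = (2 - th) / (2 * K)" and z: "z = c * (1 - e)"
    and zd: "zd \<le> K * q - q / z" and q: "q \<ge> 0"
  shows "q / z^4 + 2 * zd / (th * z^3) - 3 * q * (- (c * (e * (2/3 * K)))) / (th * z^4) \<le> 0"
proof -
  have "2 * zd / (th * z^3) \<le> 2 * (K * q - q / z) / (th * z^3)"
    using zd zpos th by (intro divide_right_mono) auto
  moreover have "q / z^4 + 2 * (K * q - q / z) / (th * z^3) - 3 * q * (- (c * (e * (2/3 * K)))) / (th * z^4) = 0"
  proof -
    have kc: "2 * K * c = 2 - th" using c K by simp
    have ce: "2 * K * c * e = (2 - th) * e" using kc by simp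
    have cz: "2 * K * z = (2 - th) - (2 - th) * e" unfolding z using kc
      by (metis (no_types, opaque_lifting) mult.assoc right_diff_distrib mult.right_neutral)
    have "q / z^4 + 2 * (K * q - q / z) / (th * z^3) - 3 * q * (- (c * (e * (2/3 * K)))) / (th * z^4)
       = q * (th + 2 * K * z - 2 + 2 * K * c * e) / (th * z^4)"
      using zpos th by (simp add: field_simps power_def)
    also have "\<dots> = 0" by (simp add: ce cz)
    finally show ?thesis .
  qed
  ultimately show ?thesis by linarith
qed

lemma pathwise:
  fixes b :: "real \<Rightarrow> real^'d \<Rightarrow> real^'d" and u v n :: "real \<Rightarrow> real^'d" and x y :: "real^'d"
  assumes Kpos: "K > 0"
    and bL: "\<forall>t\<in>{0..T}. \<forall>p q. norm (b t p - b t q) \<le> K * norm (p - q)"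
    and bT: "\<forall>p. \<exists>L. \<forall>s\<in>{0..T}. \<forall>t\<in>{0..T}. norm (b t p - b s p) \<le> L * \<bar>t - s\<bar>"
    and th0: "0 < theta0" and th2: "theta0 < 2"
    and uc: "continuous_on {0..T} u"
    and ueq: "\<forall>t\<in>{0..T}. u t = x + integral {0..t} (\<lambda>s. b s (u s)) + n t"
    and vc: "continuous_on {0..<T} v"
    and veq: "\<forall>t\<in>{0..<T}. v t = y + integral {0..t}
            (\<lambda>s. b s (v s) + (1 / zeta K theta0 T s) *\<^sub>R (u s - v s)) + n t"
    and s0: "0 \<le> s0" "s0 < T"
  shows "integral {0..s0} (\<lambda>t. (norm (u t - v t))\<^sup>2 / (zeta K theta0 T t) ^ 4)
      + (norm (u s0 - v s0))\<^sup>2 / (theta0 * (zeta K theta0 T s0) ^ 3)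
      \<le> (norm (x - y))\<^sup>2 / (theta0 * (zeta K theta0 T 0) ^ 3)"
proof -
  define z where "z = zeta K theta0 T"
  define Z where "Z t = u t - v t" for t
  define g1 where "g1 s = b s (u s)" for s
  define g2 where "g2 s = b s (v s) + (1 / z s) *\<^sub>R (u s - v s)" for s
  define h where "h t = (norm (Z t))\<^sup>2 / z t ^ 4" for t
  have sub: "{0..s0} \<subseteq> {0..T}" "{0..s0} \<subseteq> {0..<T}" using s0 by auto
  have zpos: "z t > 0" if "t \<in> {0..s0}" for t
    unfolding z_def using that s0 Kpos th2 by (intro zeta_pos) auto
  have zc: "continuous_on {0..s0} z"
    unfolding z_def zeta_def[abs_def] by (intro continuous_intros)
  have uc': "continuous_on {0..s0} u" using uc sub continuous_on_subset by blast
  have vc': "continuous_on {0..s0} v" using vc sub continuous_on_subset by blast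
  have g1c: "continuous_on {0..s0} g1"
    unfolding g1_def using b_cont[OF bL bT sub(1) uc'] .
  have g2c: "continuous_on {0..s0} g2"
    unfolding g2_def
    using zpos by (intro continuous_intros b_cont[OF bL bT sub(1) vc'] zc uc' vc') force
  have Zc: "continuous_on {0..s0} Z" unfolding Z_def by (intro continuous_intros uc' vc')
  have hc: "continuous_on {0..s0} h" unfolding h_def
    using zpos by (intro continuous_intros Zc zc) force
  have Zeq: "Z t = (x - y) + (integral {0..t} g1 - integral {0..t} g2)" if "t \<in> {0..s0}" for t
  proof -
    have "u t = x + integral {0..t} g1 + n t" using ueq that sub unfolding g1_def by auto
    moreover have "v t = y + integral {0..t} g2 + n t" using veq that sub unfolding g2_def z_def by auto
    ultimately show ?thesis unfolding Z_def by (simp add: algebra_simps)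
  qed
  have ZD: "(Z has_vector_derivative (g1 t - g2 t)) (at t within {0..s0})" if "t \<in> {0..s0}" for t
  proof (rule has_vector_derivative_transform[OF that])
    show "Z s = (x - y) + (integral {0..s} g1 - integral {0..s} g2)" if "s \<in> {0..s0}" for s
      using Zeq that .
    show "((\<lambda>s. (x - y) + (integral {0..s} g1 - integral {0..s} g2)) has_vector_derivative g1 t - g2 t) (at t within {0..s0})"
      using has_vector_derivative_add[OF has_vector_derivative_const has_vector_derivative_diff[OF integral_has_vector_derivative[OF g1c that] integral_has_vector_derivative[OF g2c that]]]
      by simp
  qed
  define F where "F s = integral {0..s} h + (Z s \<bullet> Z s) / (theta0 * z s ^ 3)" for s
  have "F s0 \<le> F 0"
  proof (rule DERIV_nonpos_imp_decreasing_open[OF s0(1)])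
    have "continuous_on {0..s0} (\<lambda>s. integral {0..s} h)"
      by (intro indefinite_integral_continuous_1 integrable_continuous_real hc)
    then show "continuous_on {0..s0} F"
      unfolding F_def
    proof (intro continuous_intros Zc zc ballI)
      fix x :: real assume "x \<in> {0..s0}"
      then have "z x > 0" by (rule zpos)
      then show "theta0 * z x ^ 3 \<noteq> 0" using th0 by simp
    qed
  next
    fix t assume t: "0 < t" "t < s0"
    then have tin: "t \<in> {0..s0}" by auto
    have atw: "at t within {0..s0} = at t" using t by (simp add: at_within_Icc_at)
    define D where "D = g1 t - g2 t"
    have ZDa: "(Z has_vector_derivative D) (at t)" using ZD[OF tin] atw D_def by simp
    have Ia: "((\<lambda>s. integral {0..s} h) has_real_derivative h t) (at t)"
      using integral_has_vector_derivative[OF hc tin] atw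
      by (simp add: has_real_derivative_iff_has_vector_derivative)
    have qa: "((\<lambda>s. Z s \<bullet> Z s) has_real_derivative 2 * (Z t \<bullet> D)) (at t)"
      unfolding has_field_derivative_def
      apply (rule has_derivative_eq_rhs)
       apply (rule has_derivative_inner[OF ZDa[unfolded has_vector_derivative_def] ZDa[unfolded has_vector_derivative_def]])
      by (auto simp: fun_eq_iff inner_commute algebra_simps)
    define e where "e = exp (2/3 * K * (t - T))"
    define c where "c = (2 - theta0) / (2 * K)"
    define zd where "zd = - (c * (e * (2/3 * K)))"
    have za: "(z has_real_derivative zd) (at t)" unfolding z_def zd_def c_def e_def by (rule zeta_deriv)
    have z3: "((\<lambda>s. theta0 * z s ^ 3) has_real_derivative theta0 * (3 * z t ^ 2 * zd)) (at t)"
      by (auto intro!: derivative_eq_intros za)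
    have zt: "z t > 0" using zpos tin by auto
    let ?y = "h t + (2 * (Z t \<bullet> D) * (theta0 * z t ^ 3) - (Z t \<bullet> Z t) * (theta0 * (3 * z t ^ 2 * zd))) / ((theta0 * z t ^ 3) * (theta0 * z t ^ 3))"
    have "(F has_real_derivative ?y) (at t)"
      unfolding F_def[abs_def]
      by (intro DERIV_add Ia DERIV_divide qa z3) (use zt th0 in auto)
    moreover have "?y \<le> 0"
    proof -
      define q where "q = Z t \<bullet> Z t"
      have q0: "q \<ge> 0" unfolding q_def by simp
      have ht: "h t = q / z t ^ 4" unfolding h_def q_def by (simp add: power2_norm_eq_inner)
      have yeq: "?y = q / z t^4 + 2 * (Z t \<bullet> D) / (theta0 * z t^3) - 3 * q * zd / (theta0 * z t^4)"
        unfolding ht q_def[symmetric] using zt th0 by (simp add: field_simps power_def)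
      have Deq: "D = (b t (u t) - b t (v t)) - (1 / z t) *\<^sub>R Z t"
        unfolding D_def g1_def g2_def Z_def by simp
      have "Z t \<bullet> (b t (u t) - b t (v t)) \<le> norm (Z t) * norm (b t (u t) - b t (v t))"
        by (rule norm_cauchy_schwarz)
      also have "\<dots> \<le> norm (Z t) * (K * norm (Z t))"
        using bL tin sub unfolding Z_def by (intro mult_left_mono) auto
      also have "\<dots> = K * q" unfolding q_def by (simp add: power2_norm_eq_inner[symmetric] power2_eq_square)
      finally have zd1: "Z t \<bullet> D \<le> K * q - q / z t"
        unfolding Deq q_def by (simp add: inner_diff_right divide_inverse mult.commute)
      have zeqc: "z t = c * (1 - e)" unfolding z_def zeta_def c_def e_def by simp
      have "q / z t^4 + 2 * (Z t \<bullet> D) / (theta0 * z t^3) - 3 * q * zd / (theta0 * z t^4) \<le> 0"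
        using key_ineq[OF zt th0 Kpos c_def zeqc zd1 q0] unfolding zd_def .
      then show ?thesis using yeq by simp
    qed
    ultimately show "\<exists>y. (F has_real_derivative y) (at t) \<and> y \<le> 0" by blast
  qed
  moreover have "Z 0 = x - y" using Zeq[of 0] s0 by simp
  ultimately have "F s0 \<le> (norm (x - y))\<^sup>2 / (theta0 * z 0 ^ 3)"
    unfolding F_def by (simp add: power2_norm_eq_inner)
  then show ?thesis
    unfolding F_def h_def Z_def z_def by (simp add: power2_norm_eq_inner)
qed


theorem mainTheorem3:
  fixes M :: "'w measure"
    and T H K Kbar alpha0 theta0 :: real
    and b :: "real \<Rightarrow> real^'d \<Rightarrow> real^'d"
    and \<sigma> :: "real \<Rightarrow> real^'d^'d"
    and N X Y :: "real \<Rightarrow> 'w \<Rightarrow> real^'d"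
    and x y :: "real^'d"
  assumes "prob_space M"
    and "T > 0" and "1/2 < H" and "H < 1"
    and "H1_drift T K b"
    and "H1_diffusion T H Kbar alpha0 \<sigma>"
    and "0 < theta0" and "theta0 < 2"
    \<comment> \<open>N t = integral of sigma dB^H over [0,t]: the common additive noise, continuous paths\<close>
    and N_cont: "AE \<omega> in M. continuous_on {0..T} (\<lambda>t. N t \<omega>)"
    and X_sol: "AE \<omega> in M. continuous_on {0..T} (\<lambda>t. X t \<omega>) \<and>
        (\<forall>t\<in>{0..T}. X t \<omega> = x + integral {0..t} (\<lambda>s. b s (X s \<omega>)) + N t \<omega>)"
    and Y_sol: "AE \<omega> in M. continuous_on {0..<T} (\<lambda>t. Y t \<omega>) \<and>
        (\<forall>t\<in>{0..<T}. Y t \<omega> = y + integral {0..t}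
            (\<lambda>s. b s (Y s \<omega>) + (1 / zeta K theta0 T s) *\<^sub>R (X s \<omega> - Y s \<omega>)) + N t \<omega>)"
  shows "AE \<omega> in M. \<forall>s0\<in>{0..<T}.
      integral {0..s0} (\<lambda>t. (norm (X t \<omega> - Y t \<omega>))\<^sup>2 / (zeta K theta0 T t) ^ 4)
      + (norm (X s0 \<omega> - Y s0 \<omega>))\<^sup>2 / (theta0 * (zeta K theta0 T s0) ^ 3)
      \<le> (norm (x - y))\<^sup>2 / (theta0 * (zeta K theta0 T 0) ^ 3)"
proof -
  from assms(5) have Kpos: "K > 0"
    and bL: "\<forall>t\<in>{0..T}. \<forall>p q. norm (b t p - b t q) \<le> K * norm (p - q)"
    and bT: "\<forall>p. \<exists>L. \<forall>s\<in>{0..T}. \<forall>t\<in>{0..T}. norm (b t p - b s p) \<le> L * \<bar>t - s\<bar>"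
    unfolding H1_drift_def by auto
  show ?thesis
    using X_sol Y_sol
  proof (eventually_elim)
    case (elim \<omega>)
    show ?case
    proof
      fix s0 assume "s0 \<in> {0..<T}"
      then have "0 \<le> s0" "s0 < T" by auto
      then show "integral {0..s0} (\<lambda>t. (norm (X t \<omega> - Y t \<omega>))\<^sup>2 / (zeta K theta0 T t) ^ 4)
      + (norm (X s0 \<omega> - Y s0 \<omega>))\<^sup>2 / (theta0 * (zeta K theta0 T s0) ^ 3)
      \<le> (norm (x - y))\<^sup>2 / (theta0 * (zeta K theta0 T 0) ^ 3)"
        using pathwise[OF Kpos bL bT assms(7,8), of "\<lambda>t. X t \<omega>" x "\<lambda>t. N t \<omega>" "\<lambda>t. Y t \<omega>" y s0] elim
        by blast
    qed
  qed
qed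

end
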